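(* Consider one execution of the Modified NCB algorithm with inputs $k$ and $W$, where $\sqrt T\le W\le T$, and assume $968kS\le T$. Let $i^*$ be an arm with $\mu_{i^*}=\mu^*$. On the event $E$, at every round $t$ of Phase 2, $\overline{\mathrm{NCB}}_{i^*,t}\ge\mu^*$, where $\overline{\mathrm{NCB}}_{i^*,t}$ denotes the value of $\overline{\mathrm{NCB}}_{i^*}$ at round $t$.
   Context: Bandit setup: $k$ arms, arm $i$ a distribution on $[0,1]$ with mean $\mu_i$, $\mu^*:=\max_i\mu_i>0$. $\log$ is the natural logarithm; $c:=3$; $T$ is the overall horizon and $S:=\frac{c^2\log T}{\mu^*}$. Modified NCB algorithm (inputs $k$, window $W$): maintain counts $n_i$ and empirical means $\widehat\mu_i$ (both initially $0$), round index $t=1$. Phase 1: while $\max_i n_i\widehat\mu_i\le 420c^2\log W$ and $t\le W$, pull a uniformly random arm, update, increment $t$. Phase 2: while $t\le W$, pull an arm maximizing $\overline{\mathrm{NCB}}_i:=\widehat\mu_i+2c\sqrt{2\widehat\mu_i\log W/n_i}$ (ties arbitrary), update, increment $t$. Canonical model: a $k\times T$ table $(Y_{i,s})$ of independent entries with $Y_{i,s}$ distributed as arm $i$, the $s$-th pull of arm $i$ yielding $Y_{i,s}$; $\widehat\mu_{i,s}:=\frac1s\sum_{r=1}^sY_{i,r}$. The uniform choices in Phase 1 are $U_1,U_2,\dots$, independent uniform in $[k]$ (independent of the table). Events: $E_1$: for every integer $r$ with $128kS\le r\le T$ and every arm $i$, the number of $r'\le r$ with $U_{r'}=i$ is at least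 $\frac{r}{2k}$ and at most $\frac{3r}{2k}$. $E_2$: for every arm $i$ with $\mu_i>\frac{\mu^*}{64}$ and every integer $s$ with $64S\le s\le T$, $|\mu_i-\widehat\mu_{i,s}|\le c\sqrt{\frac{\mu_i\log T}{s}}$. $E_3$: for every arm $j$ with $\mu_j\le\frac{\mu^*}{64}$ and every integer $s$ with $64S\le s\le T$, $\widehat\mu_{j,s}<\frac{\mu^*}{32}$. $E:=E_1\cap E_2\cap E_3$. *)

theory Defs
  imports "HOL-Analysis.Analysis"
begin

text \<open>Arms are 0..<k. Rounds are 1,2,... . The table entry Y i s is the s-th pull (s \<ge> 1) of arm i.
An execution is given by the sequence A of pulled arms, A t being the arm pulled in round t.\<close>

definition ncb_c :: real where "ncb_c = 3"

definition mu_star :: "nat \<Rightarrow> (nat \<Rightarrow> real) \<Rightarrow> real" where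
  "mu_star k \<mu> = Max (\<mu> ` {..<k})"

definition S_par :: "nat \<Rightarrow> (nat \<Rightarrow> real) \<Rightarrow> nat \<Rightarrow> real" where
  "S_par k \<mu> T = ncb_c ^ 2 * ln (real T) / mu_star k \<mu>"

text \<open>empirical mean of the first s samples of arm i (0 if s = 0)\<close>
definition emp_mean :: "(nat \<Rightarrow> nat \<Rightarrow> real) \<Rightarrow> nat \<Rightarrow> nat \<Rightarrow> real" where
  "emp_mean Y i s = (\<Sum>r = 1..s. Y i r) / real s"

text \<open>number of pulls of arm i before round t (i.e. the count n_i at the start of round t)\<close>
definition pulls :: "(nat \<Rightarrow> nat) \<Rightarrow> nat \<Rightarrow> nat \<Rightarrow> nat" where
  "pulls A i t = card {t'. 1 \<le> t' \<and> t' < t \<and> A t' = i}"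

definition ncb :: "(nat \<Rightarrow> nat \<Rightarrow> real) \<Rightarrow> (nat \<Rightarrow> nat) \<Rightarrow> nat \<Rightarrow> nat \<Rightarrow> nat \<Rightarrow> real" where
  "ncb Y A W i t =
     emp_mean Y i (pulls A i t)
     + 2 * ncb_c * sqrt (2 * emp_mean Y i (pulls A i t) * ln (real W) / real (pulls A i t))"

definition phase1_guard :: "nat \<Rightarrow> (nat \<Rightarrow> nat \<Rightarrow> real) \<Rightarrow> (nat \<Rightarrow> nat) \<Rightarrow> nat \<Rightarrow> nat \<Rightarrow> bool" where
  "phase1_guard k Y A W t =
     (Max ((\<lambda>i. real (pulls A i t) * emp_mean Y i (pulls A i t)) ` {..<k})
        \<le> 420 * ncb_c ^ 2 * ln (real W) \<and> t \<le> W)"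

definition in_phase1 :: "nat \<Rightarrow> (nat \<Rightarrow> nat \<Rightarrow> real) \<Rightarrow> (nat \<Rightarrow> nat) \<Rightarrow> nat \<Rightarrow> nat \<Rightarrow> bool" where
  "in_phase1 k Y A W t = (1 \<le> t \<and> (\<forall>t'. 1 \<le> t' \<and> t' \<le> t \<longrightarrow> phase1_guard k Y A W t'))"

definition in_phase2 :: "nat \<Rightarrow> (nat \<Rightarrow> nat \<Rightarrow> real) \<Rightarrow> (nat \<Rightarrow> nat) \<Rightarrow> nat \<Rightarrow> nat \<Rightarrow> bool" where
  "in_phase2 k Y A W t = (1 \<le> t \<and> t \<le> W \<and> \<not> in_phase1 k Y A W t)"

text \<open>A is an execution of Modified NCB (with some tie-breaking) driven by table Y and uniform choices U\<close>
definition valid_run :: "nat \<Rightarrow> nat \<Rightarrow> (nat \<Rightarrow> nat \<Rightarrow> real) \<Rightarrow> (nat \<Rightarrow> nat) \<Rightarrow> (nat \<Rightarrow> nat) \<Rightarrow> bool" where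
  "valid_run k W Y U A =
     (\<forall>t. 1 \<le> t \<and> t \<le> W \<longrightarrow>
        A t < k
        \<and> (in_phase1 k Y A W t \<longrightarrow> A t = U t)
        \<and> (in_phase2 k Y A W t \<longrightarrow> (\<forall>j<k. ncb Y A W j t \<le> ncb Y A W (A t) t)))"

definition event_E1 :: "nat \<Rightarrow> (nat \<Rightarrow> real) \<Rightarrow> nat \<Rightarrow> (nat \<Rightarrow> nat) \<Rightarrow> bool" where
  "event_E1 k \<mu> T U =
     (\<forall>r::nat. 128 * real k * S_par k \<mu> T \<le> real r \<and> r \<le> T \<longrightarrow>
        (\<forall>i<k. real r / (2 * real k) \<le> real (card {r'. 1 \<le> r' \<and> r' \<le> r \<and> U r' = i})
             \<and> real (card {r'. 1 \<le> r' \<and> r' \<le> r \<and> U r' = i}) \<le> 3 * real r / (2 * real k)))"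

definition event_E2 :: "nat \<Rightarrow> (nat \<Rightarrow> real) \<Rightarrow> nat \<Rightarrow> (nat \<Rightarrow> nat \<Rightarrow> real) \<Rightarrow> bool" where
  "event_E2 k \<mu> T Y =
     (\<forall>i<k. \<mu> i > mu_star k \<mu> / 64 \<longrightarrow>
        (\<forall>s::nat. 64 * S_par k \<mu> T \<le> real s \<and> s \<le> T \<longrightarrow>
           \<bar>\<mu> i - emp_mean Y i s\<bar> \<le> ncb_c * sqrt (\<mu> i * ln (real T) / real s)))"

definition event_E3 :: "nat \<Rightarrow> (nat \<Rightarrow> real) \<Rightarrow> nat \<Rightarrow> (nat \<Rightarrow> nat \<Rightarrow> real) \<Rightarrow> bool" where
  "event_E3 k \<mu> T Y =
     (\<forall>j<k. \<mu> j \<le> mu_star k \<mu> / 64 \<longrightarrow>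
        (\<forall>s::nat. 64 * S_par k \<mu> T \<le> real s \<and> s \<le> T \<longrightarrow>
           emp_mean Y j s < mu_star k \<mu> / 32))"

end

theory Submission
  imports Defs
begin

lemma ln2_half: "ln (2::real) \<ge> 1/2"
proof -
  have "ln (1/2::real) \<le> 1/2 - 1" by (rule ln_le_minus_one) auto
  moreover have "ln (1/2::real) = - ln 2" by (simp add: ln_div)
  ultimately show ?thesis by linarith
qed

lemma final_ineq:
  fixes ms L n m lw :: real
  assumes ms: "ms > 0" and L: "L \<ge> 0" and n: "n > 0" and nS: "64 * (9 * L / ms) \<le> n"
    and dev: "\<bar>ms - m\<bar> \<le> 3 * sqrt (ms * L / n)" and lw: "lw \<ge> L / 2"
  shows "m + 2 * 3 * sqrt (2 * m * lw / n) \<ge> ms"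
proof -
  define a where "a = sqrt (ms * L / n)"
  have "L / n \<le> ms / 576" using nS ms n by (simp add: field_simps)
  hence "ms * L / n \<le> ms * (ms / 576)" using ms by (simp add: mult_left_mono divide_simps) 
  hence "a \<le> sqrt ((ms/24)^2)" unfolding a_def by (intro real_sqrt_le_mono) (simp add: power2_eq_square)
  hence a: "a \<le> ms / 24" using ms by simp
  have m: "m \<ge> ms / 4" using dev a unfolding a_def[symmetric] by linarith
  have "ms / 4 * L / n \<le> 2 * m * lw / n"
  proof -
    have "ms/4 * L \<le> m * L" by (rule mult_right_mono[OF m L])
    also have "\<dots> \<le> m * (2 * lw)" using lw m ms L by (intro mult_left_mono) auto
    also have "\<dots> = 2 * m * lw" by simp
    finally have "ms / 4 * L \<le> 2 * m * lw" .
    thus ?thesis using n by (intro divide_right_mono) auto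
  qed
  hence "sqrt (ms / 4 * L / n) \<le> sqrt (2 * m * lw / n)" by simp
  moreover have "sqrt (ms / 4 * L / n) = a / 2" unfolding a_def
    by (simp add: real_sqrt_divide real_sqrt_mult)
  ultimately show ?thesis using dev unfolding a_def[symmetric] by linarith
qed

lemma sum_bound:
  fixes s e mj ms L :: real
  assumes s: "s > 0" and mj: "0 \<le> mj" "mj \<le> ms" and L: "L \<ge> 0"
    and e: "e \<le> mj + 3 * sqrt (mj * L / s)"
  shows "s * e \<le> s * ms + 3 * sqrt (ms * L * s)"
proof -
  have "s * e \<le> s * mj + 3 * (s * sqrt (mj * L / s))" using e s
    by (smt (verit) mult_left_mono distrib_left)
  also have "s * sqrt (mj * L / s) = sqrt (mj * L * s)"
  proof -
    have "s * sqrt (mj * L / s) = sqrt (s^2) * sqrt (mj * L / s)" using s by simp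
    also have "\<dots> = sqrt (s^2 * (mj * L / s))" by (rule real_sqrt_mult[symmetric])
    also have "s^2 * (mj * L / s) = mj * L * s" using s by (simp add: power2_eq_square field_simps)
    finally show ?thesis .
  qed
  also have "sqrt (mj * L * s) \<le> sqrt (ms * L * s)" using mj L s
    by (simp add: mult_right_mono)
  finally show ?thesis using s mj by (smt (verit) mult_left_mono)
qed

lemma contra_ineq:
  fixes s ms L :: real
  assumes L: "L \<ge> 1/2" and ms: "0 < ms" "ms \<le> 1" and s0: "s \<ge> 0"
    and s: "s \<le> 192 * (9 * L / ms) + 3/2"
  shows "s * ms + 3 * sqrt (ms * L * s) \<le> 1890 * L"
proof -
  have sm: "s * ms \<le> 1728 * L + 3/2 * ms" using s ms by (simp add: field_simps)
  hence sm2: "s * ms \<le> 1728 * L + 3/2" using ms by linarith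
  have "ms * L * s = (s * ms) * L" by simp
  also have "\<dots> \<le> (1728 * L + 3/2) * L" using L by (intro mult_right_mono[OF sm2]) auto
  also have "\<dots> \<le> (54 * L - 1/2)^2"
  proof -
    have "0 \<le> L * (1188 * L - 111/2)" using L by (intro mult_nonneg_nonneg) auto
    thus ?thesis by (simp add: power2_eq_square algebra_simps)
  qed
  finally have "sqrt (ms * L * s) \<le> sqrt ((54 * L - 1/2)^2)" by (rule real_sqrt_le_mono)
  hence "sqrt (ms * L * s) \<le> 54 * L - 1/2" using L by simp
  thus ?thesis using sm2 by linarith
qed


theorem lemma9:
  fixes k W T istar :: nat and \<mu> :: "nat \<Rightarrow> real"
    and Y :: "nat \<Rightarrow> nat \<Rightarrow> real" and U A :: "nat \<Rightarrow> nat"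
  assumes k_pos: "k \<ge> 1"
    and mu_range: "\<forall>i<k. 0 \<le> \<mu> i \<and> \<mu> i \<le> 1"
    and mu_star_pos: "mu_star k \<mu> > 0"
    and Y_range: "\<forall>i<k. \<forall>s. 1 \<le> s \<and> s \<le> T \<longrightarrow> 0 \<le> Y i s \<and> Y i s \<le> 1"
    and U_range: "\<forall>t\<ge>1. U t < k"
    and W_lower: "sqrt (real T) \<le> real W"
    and W_upper: "W \<le> T"
    and T_large: "968 * real k * S_par k \<mu> T \<le> real T"
    and istar: "istar < k" "\<mu> istar = mu_star k \<mu>"
    and run: "valid_run k W Y U A"
    and E1: "event_E1 k \<mu> T U"
    and E2: "event_E2 k \<mu> T Y"
    and E3: "event_E3 k \<mu> T Y"
  shows "\<forall>t. in_phase2 k Y A W t \<longrightarrow> ncb Y A W istar t \<ge> mu_star k \<mu>"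
proof (intro allI impI)
  fix t assume p2: "in_phase2 k Y A W t"
  define L where "L = ln (real T)"
  define ms where "ms = mu_star k \<mu>"
  define S where "S = S_par k \<mu> T"
  have ms0: "ms > 0" using mu_star_pos ms_def by simp
  have S_eq: "S = 9 * L / ms" by (simp add: S_def S_par_def L_def ms_def ncb_c_def)
  have ms_le1: "ms \<le> 1" using istar mu_range ms_def by auto
  have mu_le: "\<And>j. j < k \<Longrightarrow> \<mu> j \<le> ms" unfolding ms_def mu_star_def by (intro Max_ge) auto
  from p2 have t1: "1 \<le> t" "t \<le> W" and np1: "\<not> in_phase1 k Y A W t" by (auto simp: in_phase2_def)
  have W1: "W \<ge> 1" using t1 by simp
  have T1: "T \<ge> 1" using W1 W_upper by simp
  have lnW0: "ln (real W) \<ge> 0" using W1 by simp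
  have lnW: "ln (real W) \<ge> L / 2"
  proof -
    have "ln (sqrt (real T)) \<le> ln (real W)" using W_lower T1 W1 by (subst ln_le_cancel_iff) auto
    moreover have "ln (sqrt (real T)) = L/2" using T1 by (simp add: L_def ln_sqrt)
    ultimately show ?thesis by simp
  qed
  define P where "P t' \<longleftrightarrow> 1 \<le> t' \<and> t' \<le> t \<and> \<not> phase1_guard k Y A W t'" for t'
  have "\<exists>t'. P t'" using np1 t1 unfolding in_phase1_def P_def by auto
  define t0 where "t0 = (LEAST t'. P t')"
  have Pt0: "P t0" unfolding t0_def by (rule LeastI_ex) fact
  hence t0: "1 \<le> t0" "t0 \<le> t" "t0 \<le> W" using t1 by (auto simp: P_def)
  have before: "phase1_guard k Y A W t''" if "1 \<le> t''" "t'' < t0" for t''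
  proof -
    have "\<not> P t''" using that(2) unfolding t0_def by (rule not_less_Least)
    thus ?thesis using that t0 by (auto simp: P_def)
  qed
  have AU: "A t'' = U t''" if "1 \<le> t''" "t'' < t0" for t''
  proof -
    have "in_phase1 k Y A W t''" unfolding in_phase1_def using that before by auto
    thus ?thesis using run that t0 unfolding valid_run_def by auto
  qed
  have pullsU: "pulls A i t0 = card {r'. 1 \<le> r' \<and> r' \<le> t0 - 1 \<and> U r' = i}" for i
    unfolding pulls_def using AU t0 by (intro arg_cong[where f=card]) auto
  have nguard: "\<not> Max ((\<lambda>i. real (pulls A i t0) * emp_mean Y i (pulls A i t0)) ` {..<k})
        \<le> 420 * ncb_c ^ 2 * ln (real W)"
    using Pt0 t0 by (auto simp: P_def phase1_guard_def)
  have fin: "finite ((\<lambda>i. real (pulls A i t0) * emp_mean Y i (pulls A i t0)) ` {..<k})" by simp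
  have ne: "((\<lambda>i. real (pulls A i t0) * emp_mean Y i (pulls A i t0)) ` {..<k}) \<noteq> {}" using k_pos by (auto simp: lessThan_empty_iff)
  obtain j where j: "j < k" and jbig:
    "real (pulls A j t0) * emp_mean Y j (pulls A j t0) > 3780 * ln (real W)"
  proof -
    have "Max ((\<lambda>i. real (pulls A i t0) * emp_mean Y i (pulls A i t0)) ` {..<k})
       \<in> ((\<lambda>i. real (pulls A i t0) * emp_mean Y i (pulls A i t0)) ` {..<k})"
      using fin ne by (rule Max_in)
    then obtain j where "j < k" "Max ((\<lambda>i. real (pulls A i t0) * emp_mean Y i (pulls A i t0)) ` {..<k})
       = real (pulls A j t0) * emp_mean Y j (pulls A j t0)" by auto
    thus ?thesis using nguard that by (auto simp: ncb_c_def)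
  qed
  have t0_2: "t0 \<ge> 2"
  proof (rule ccontr)
    assume "\<not> t0 \<ge> 2"
    hence "t0 = 1" using t0 by simp
    hence "pulls A j t0 = 0" by (simp add: pulls_def)
    thus False using jbig lnW0 by simp
  qed
  have T2: "T \<ge> 2" using t0_2 t0 W_upper by simp
  have L2: "L \<ge> 1/2"
  proof -
    have "ln (2::real) \<le> L" unfolding L_def using T2 by (subst ln_le_cancel_iff) auto
    thus ?thesis using ln2_half by simp
  qed
  have S0: "S > 0" using S_eq L2 ms0 by simp
  have kS1: "S \<le> real k * S" using S0 k_pos mult_right_mono[of 1 "real k" S] by simp
  have TS: "968 * (real k * S) \<le> real T" using T_large unfolding S_def by simp
  define r where "r = t0 - 1"
  have rT: "r \<le> T" using t0 W_upper r_def by simp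
  have kS: "128 * real k * S \<le> real r"
  proof (rule ccontr)
    assume "\<not> 128 * real k * S \<le> real r"
    hence rlt: "real r < 128 * real k * S" by simp
    define r1 where "r1 = nat \<lceil>128 * real k * S\<rceil>"
    have r1a: "128 * real k * S \<le> real r1" unfolding r1_def by linarith
    have r1b: "real r1 \<le> 128 * real k * S + 1"
    proof -
      have "0 \<le> 128 * real k * S" using S0 by simp
      hence "real r1 = real_of_int \<lceil>128 * real k * S\<rceil>" unfolding r1_def by simp
      thus ?thesis using of_int_ceiling_le_add_one[of "128 * real k * S"] by linarith
    qed
    have "128 * real k * S \<le> real T" using TS kS1 S0 by linarith
    hence r1T: "r1 \<le> T" unfolding r1_def by (simp add: ceiling_le_iff nat_le_iff)
    have rr1: "r \<le> r1" using rlt r1a by simp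
    have "pulls A j t0 \<le> card {r'. 1 \<le> r' \<and> r' \<le> r1 \<and> U r' = j}"
      unfolding pullsU r_def[symmetric] using rr1 by (intro card_mono) auto
    also have "real (card {r'. 1 \<le> r' \<and> r' \<le> r1 \<and> U r' = j}) \<le> 3 * real r1 / (2 * real k)"
      using E1 r1a r1T j unfolding event_E1_def S_def by blast
    finally have "real (pulls A j t0) \<le> 3 * real r1 / (2 * real k)" by simp
    also have "\<dots> \<le> 3 * (128 * real k * S + 1) / (2 * real k)"
      using r1b k_pos by (intro divide_right_mono) auto
    also have "\<dots> = 192 * S + 3 / (2 * real k)" using k_pos by (simp add: field_simps)
    also have "\<dots> \<le> 192 * S + 3/2" using k_pos by (simp add: field_simps)
    finally have nj: "real (pulls A j t0) \<le> 192 * S + 3/2" .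
    define s where "s = max (pulls A j t0) (nat \<lceil>64 * S\<rceil>)"
    have s64: "64 * S \<le> real s" unfolding s_def by linarith
    have s0: "real s > 0" using s64 S0 by linarith
    have "64 * S \<le> real T" using TS kS1 S0 by linarith
    hence "nat \<lceil>64 * S\<rceil> \<le> T" by (simp add: ceiling_le_iff nat_le_iff)
    moreover have "pulls A j t0 \<le> T"
    proof -
      have "card {r'. 1 \<le> r' \<and> r' \<le> r1 \<and> U r' = j} \<le> card {1..r1}" by (intro card_mono) auto
      thus ?thesis using \<open>pulls A j t0 \<le> _\<close> r1T by simp
    qed
    ultimately have sT: "s \<le> T" unfolding s_def by simp
    have sle: "real s \<le> 192 * S + 3/2" unfolding s_def using nj S0 by linarith
    have sum1: "real n * emp_mean Y j n = (\<Sum>r = 1..n. Y j r)" for n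
      by (cases "n = 0") (auto simp: emp_mean_def)
    have "(\<Sum>r = 1..pulls A j t0. Y j r) \<le> (\<Sum>r = 1..s. Y j r)"
    proof (rule sum_mono2)
      show "{1..pulls A j t0} \<subseteq> {1..s}" unfolding s_def by auto
      show "0 \<le> Y j b" if "b \<in> {1..s} - {1..pulls A j t0}" for b
        using Y_range j sT that by auto
    qed simp
    hence le1: "real (pulls A j t0) * emp_mean Y j (pulls A j t0) \<le> real s * emp_mean Y j s"
      by (simp add: sum1)
    have "real s * emp_mean Y j s \<le> real s * ms + 3 * sqrt (ms * L * real s)"
    proof (cases "\<mu> j > ms / 64")
      case True
      hence "\<bar>\<mu> j - emp_mean Y j s\<bar> \<le> ncb_c * sqrt (\<mu> j * ln (real T) / real s)"
        using E2 j s64 sT unfolding event_E2_def ms_def S_def by blast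
      hence "emp_mean Y j s \<le> \<mu> j + 3 * sqrt (\<mu> j * L / real s)" by (simp add: ncb_c_def L_def)
      thus ?thesis using s0 mu_range j mu_le L2 by (intro sum_bound) auto
    next
      case False
      hence "emp_mean Y j s < ms / 32"
        using E3 j s64 sT unfolding event_E3_def ms_def S_def by auto
      hence "real s * emp_mean Y j s \<le> real s * ms" using s0 ms0
        by (intro mult_left_mono) auto
      moreover have "0 \<le> sqrt (ms * L * real s)" using ms0 L2 s0 by simp
      ultimately show ?thesis by linarith
    qed
    also have "\<dots> \<le> 1890 * L" using L2 ms0 ms_le1 s0 sle unfolding S_eq by (intro contra_ineq) auto
    finally show False using le1 jbig lnW by linarith
  qed
  have "real r / (2 * real k) \<le> real (card {r'. 1 \<le> r' \<and> r' \<le> r \<and> U r' = istar})"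
    using E1 kS rT istar(1) unfolding event_E1_def S_def by blast
  hence n0: "real r / (2 * real k) \<le> real (pulls A istar t0)" by (simp add: pullsU r_def)
  have "64 * S \<le> real r / (2 * real k)" using kS k_pos by (simp add: field_simps)
  hence n0': "64 * S \<le> real (pulls A istar t0)" using n0 by linarith
  have mono: "pulls A istar t0 \<le> pulls A istar t"
    unfolding pulls_def using t0 by (intro card_mono) auto
  have nT: "pulls A istar t \<le> T"
  proof -
    have "pulls A istar t \<le> card {1..<t}" unfolding pulls_def by (intro card_mono) auto
    thus ?thesis using t1 W_upper by simp
  qed
  define n where "n = pulls A istar t"
  have nS: "64 * S \<le> real n" using n0' mono n_def by (smt (verit) of_nat_mono)
  have npos: "real n > 0" using nS S0 by linarith
  have "\<bar>\<mu> istar - emp_mean Y istar n\<bar> \<le> ncb_c * sqrt (\<mu> istar * ln (real T) / real n)"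
    using E2 istar nS nT ms0 unfolding event_E2_def ms_def S_def n_def by auto
  hence dev: "\<bar>ms - emp_mean Y istar n\<bar> \<le> 3 * sqrt (ms * L / real n)"
    using istar by (simp add: ncb_c_def L_def ms_def)
  have "emp_mean Y istar n + 2 * 3 * sqrt (2 * emp_mean Y istar n * ln (real W) / real n) \<ge> ms"
    using ms0 L2 npos nS dev lnW unfolding S_eq by (intro final_ineq) auto
  thus "ncb Y A W istar t \<ge> mu_star k \<mu>"
    by (simp add: ncb_def n_def ms_def ncb_c_def)
qed

end
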